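(* For every $n\ge 4$, the number of strongly magic quad squares that can be made using the cards of the EvenQuads-$2^n$ deck is $2^n(2^n-1)(2^n-2)(2^n-4)(2^n-8)$.
   Context: The EvenQuads-$2^n$ deck consists of $2^n$ cards identified with the integers $0,1,\dots,2^n-1$ (equivalently with $\mathbb{Z}_2^n$ via binary expansion). Four cards $a,b,c,d$ form a quad if and only if $a\oplus b\oplus c\oplus d=0$, where $\oplus$ is bitwise XOR. A quad square is a $4\times4$ array of $16$ pairwise distinct cards. Index rows and columns by $0,1,2,3$; a quad square is strongly magic if for any four distinct positions $(i_1,j_1),\dots,(i_4,j_4)$ with $i_1\oplus i_2\oplus i_3\oplus i_4=0$ and $j_1\oplus j_2\oplus j_3\oplus j_4=0$, the four cards in these positions form a quad. *)

theory Defs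
  imports Main "HOL-Library.FuncSet"
begin

text \<open>Cards of the EvenQuads-2^n deck are the naturals 0..2^n-1; XOR is the bitwise xor on nat.\<close>

definition is_quad :: "nat \<Rightarrow> nat \<Rightarrow> nat \<Rightarrow> nat \<Rightarrow> bool" where
  "is_quad a b c d \<longleftrightarrow> xor (xor (xor a b) c) d = 0"

definition positions :: "(nat \<times> nat) set" where
  "positions = {0..<4} \<times> {0..<4}"

definition quad_squares :: "nat \<Rightarrow> (nat \<times> nat \<Rightarrow> nat) set" where
  "quad_squares n = {Q \<in> positions \<rightarrow>\<^sub>E {..<2^n}. inj_on Q positions}"

definition strongly_magic :: "(nat \<times> nat \<Rightarrow> nat) \<Rightarrow> bool" where
  "strongly_magic Q \<longleftrightarrow>
    (\<forall>p1 p2 p3 p4. p1 \<in> positions \<and> p2 \<in> positions \<and> p3 \<in> positions \<and> p4 \<in> positions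
       \<and> distinct [p1, p2, p3, p4]
       \<and> xor (xor (xor (fst p1) (fst p2)) (fst p3)) (fst p4) = 0
       \<and> xor (xor (xor (snd p1) (snd p2)) (snd p3)) (snd p4) = 0
       \<longrightarrow> is_quad (Q p1) (Q p2) (Q p3) (Q p4))"

end

theory Submission
  imports Defs
begin

fun comb :: "nat list \<Rightarrow> nat \<Rightarrow> nat" where
  "comb [] m = 0"
| "comb (x#xs) m = xor (if odd m then x else 0) (comb xs (m div 2))"

lemma xor_div2: "(xor m n) div 2 = xor (m div 2) (n div 2)" for m n :: nat
  by (subst xor_nat_rec) simp

lemma odd_xor_nat: "odd (xor m n) \<longleftrightarrow> (odd m \<noteq> odd n)" for m n :: nat
  using even_xor_iff[of m n] by auto

lemma xor_cancel_left [simp]: "xor a (xor a b) = b" for a b :: nat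
  by (simp flip: xor.assoc)

lemma xor_left_inj [simp]: "xor a b = xor a c \<longleftrightarrow> b = c" for a b c :: nat
  by (metis xor_cancel_left)

lemma xor4: "xor (xor (xor (xor c (xor t1 d1)) (xor c (xor t2 d2))) (xor c (xor t3 d3))) (xor c (xor t4 d4)) = xor (xor (xor (xor t1 t2) t3) t4) (xor (xor (xor d1 d2) d3) d4)" for c t1 t2 t3 t4 d1 d2 d3 d4 :: nat
  by (simp add: xor.assoc xor.commute xor.left_commute)

lemma xor_eq0: "xor a b = 0 \<Longrightarrow> a = b" for a b :: nat
  by (metis xor_cancel_left xor.comm_neutral)

lemma xor_lt: "a < 2^n \<Longrightarrow> b < 2^n \<Longrightarrow> xor a b < (2::nat)^n" for a b :: nat
  by (metis take_bit_nat_eq_self_iff take_bit_xor)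

lemma comb_xor: "comb xs (xor m m') = xor (comb xs m) (comb xs m')"
proof (induction xs arbitrary: m m')
  case Nil then show ?case by simp
next
  case (Cons x xs)
  show ?case
    by (simp add: Cons xor_div2 odd_xor_nat ac_simps)
qed

lemma comb_0 [simp]: "comb xs 0 = 0"
  by (induction xs) auto

lemma comb_lt: "set xs \<subseteq> {..<2^n} \<Longrightarrow> comb xs m < 2^n"
  by (induction xs arbitrary: m) (auto intro!: xor_lt)

definition indep :: "nat list \<Rightarrow> bool" where
  "indep xs \<longleftrightarrow> (\<forall>m<2^length xs. comb xs m = 0 \<longrightarrow> m = 0)"

definition spanL :: "nat list \<Rightarrow> nat set" where
  "spanL xs = comb xs ` {..<2^length xs}"

lemma indep_inj: "indep xs \<Longrightarrow> inj_on (comb xs) {..<2^length xs}"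
proof (rule inj_onI)
  fix m m' assume i: "indep xs" and m: "m \<in> {..<2^length xs}" "m' \<in> {..<2^length xs}"
    and e: "comb xs m = comb xs m'"
  have "comb xs (xor m m') = 0" by (simp add: comb_xor e)
  moreover have "xor m m' < 2^length xs" using m by (auto intro: xor_lt)
  ultimately have "xor m m' = 0" using i unfolding indep_def by blast
  then show "m = m'" by (rule xor_eq0)
qed

lemma card_span: "indep xs \<Longrightarrow> card (spanL xs) = 2^length xs"
  unfolding spanL_def by (simp add: card_image indep_inj)

lemma span_sub: "set xs \<subseteq> {..<2^n} \<Longrightarrow> spanL xs \<subseteq> {..<2^n}"
  unfolding spanL_def using comb_lt by auto

lemma indep_Cons: "indep (x#xs) \<longleftrightarrow> indep xs \<and> x \<notin> spanL xs"
proof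
  assume i: "indep (x#xs)"
  have "indep xs" unfolding indep_def
  proof (intro allI impI)
    fix m assume "m < 2^length xs" "comb xs m = 0"
    then have "2*m < 2^length (x#xs)" "comb (x#xs) (2*m) = 0" by auto
    then show "m = 0" using i unfolding indep_def by fastforce
  qed
  moreover have "x \<notin> spanL xs"
  proof
    assume "x \<in> spanL xs"
    then obtain m where m: "m < 2^length xs" "x = comb xs m" unfolding spanL_def by auto
    then have "2*m+1 < 2^length (x#xs)" "comb (x#xs) (2*m+1) = 0" by auto
    then show False using i unfolding indep_def by fastforce
  qed
  ultimately show "indep xs \<and> x \<notin> spanL xs" by blast
next
  assume a: "indep xs \<and> x \<notin> spanL xs"
  show "indep (x#xs)" unfolding indep_def
  proof (intro allI impI)
    fix m assume m: "m < 2^length (x#xs)" "comb (x#xs) m = 0"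
    have md: "m div 2 < 2^length xs" using m(1) by auto
    show "m = 0"
    proof (cases "odd m")
      case True
      then have "x = comb xs (m div 2)" using m(2) by (auto dest: xor_eq0)
      then have "x \<in> spanL xs" using md unfolding spanL_def by auto
      then show ?thesis using a by blast
    next
      case False
      then have "comb xs (m div 2) = 0" using m(2) by auto
      then have "m div 2 = 0" using a md unfolding indep_def by blast
      then show ?thesis using False by auto
    qed
  qed
qed

definition IL :: "nat \<Rightarrow> nat \<Rightarrow> nat list set" where
  "IL n k = {xs. length xs = k \<and> set xs \<subseteq> {..<2^n} \<and> indep xs}"

lemma finite_IL: "finite (IL n k)"
proof -
  have "IL n k \<subseteq> {xs. set xs \<subseteq> {..<2^n} \<and> length xs = k}" unfolding IL_def by auto
  then show ?thesis using finite_lists_length_eq[of "{..<(2::nat)^n}" k] finite_subset by blast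
qed

lemma IL_Suc: "IL n (Suc k) = (\<lambda>(xs,x). x#xs) ` (SIGMA xs:IL n k. {..<2^n} - spanL xs)"
proof
  show "IL n (Suc k) \<subseteq> (\<lambda>(xs,x). x#xs) ` (SIGMA xs:IL n k. {..<2^n} - spanL xs)"
  proof
    fix ys assume "ys \<in> IL n (Suc k)"
    then obtain x xs where ys: "ys = x#xs" and "length xs = k" "set (x#xs) \<subseteq> {..<2^n}" "indep (x#xs)"
      unfolding IL_def by (auto simp: length_Suc_conv)
    then have "(xs, x) \<in> (SIGMA xs:IL n k. {..<2^n} - spanL xs)"
      unfolding IL_def by (auto simp: indep_Cons)
    then show "ys \<in> (\<lambda>(xs,x). x#xs) ` (SIGMA xs:IL n k. {..<2^n} - spanL xs)"
      using ys by (auto intro!: image_eqI[where x="(xs,x)"])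
  qed
next
  show "(\<lambda>(xs,x). x#xs) ` (SIGMA xs:IL n k. {..<2^n} - spanL xs) \<subseteq> IL n (Suc k)"
    unfolding IL_def by (auto simp: indep_Cons)
qed

lemma card_IL: "card (IL n k) = (\<Prod>i<k. 2^n - 2^i)"
proof (induction k)
  case 0
  have "IL n 0 = {[]}" unfolding IL_def by (auto simp: indep_def)
  then show ?case by simp
next
  case (Suc k)
  have inj: "inj_on (\<lambda>(xs,x). x#xs) (SIGMA xs:IL n k. {..<2^n} - spanL xs)"
    by (auto simp: inj_on_def)
  have fin: "finite (SIGMA xs:IL n k. {..<(2::nat)^n} - spanL xs)"
    using finite_IL by auto
  have "card (IL n (Suc k)) = card (SIGMA xs:IL n k. {..<2^n} - spanL xs)"
    unfolding IL_Suc by (rule card_image[OF inj])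
  also have "\<dots> = (\<Sum>xs\<in>IL n k. card ({..<2^n} - spanL xs))"
    by (rule card_SigmaI) (auto simp: finite_IL)
  also have "\<dots> = (\<Sum>xs\<in>IL n k. 2^n - 2^k)"
  proof (rule sum.cong)
    fix xs assume "xs \<in> IL n k"
    then have "spanL xs \<subseteq> {..<2^n}" "card (spanL xs) = 2^k" "length xs = k"
      unfolding IL_def using span_sub card_span by auto
    then show "card ({..<2^n} - spanL xs) = 2^n - 2^k"
      by (simp add: card_Diff_subset finite_subset)
  qed simp
  also have "\<dots> = card (IL n k) * (2^n - 2^k)" by simp
  finally show ?case using Suc by simp
qed

lemma comb_append: "i < 2^length ys \<Longrightarrow> comb (ys@zs) (i + 2^length ys * j) = xor (comb ys i) (comb zs j)"
proof (induction ys arbitrary: i)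
  case Nil then show ?case by simp
next
  case (Cons y ys)
  have o: "odd (i + 2^length (y#ys) * j) = odd i" by simp
  have d: "(i + 2^length (y#ys) * j) div 2 = i div 2 + 2^length ys * j" by simp
  have "i div 2 < 2^length ys" using Cons.prems by auto
  then show ?case using Cons.IH[of "i div 2"] by (simp only: o d comb.simps append_Cons) (simp add: ac_simps)
qed

definition F :: "nat \<Rightarrow> nat list \<Rightarrow> (nat \<times> nat \<Rightarrow> nat)" where
  "F c xs = restrict (\<lambda>p. xor c (xor (comb (take 2 xs) (fst p)) (comb (drop 2 xs) (snd p)))) positions"

lemma comb4: "length xs = 4 \<Longrightarrow> i < 4 \<Longrightarrow> comb xs (i + 4*j) = xor (comb (take 2 xs) i) (comb (drop 2 xs) j)"
  using comb_append[of i "take 2 xs" "drop 2 xs" j] by simp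

lemma F_good:
  assumes c: "c < 2^n" and xs: "xs \<in> IL n 4"
  shows "F c xs \<in> quad_squares n" "strongly_magic (F c xs)"
proof -
  have len: "length xs = 4" and sub: "set xs \<subseteq> {..<2^n}" and ind: "indep xs"
    using xs unfolding IL_def by auto
  have inj: "inj_on (comb xs) {..<2^length xs}" using indep_inj[OF ind] .
  have sub2a: "set (take 2 xs) \<subseteq> {..<2^n}" using set_take_subset[of 2 xs] sub by (rule order_trans)
  have sub2b: "set (drop 2 xs) \<subseteq> {..<2^n}" using set_drop_subset[of 2 xs] sub by (rule order_trans)
  have "F c xs \<in> positions \<rightarrow>\<^sub>E {..<2^n}"
    unfolding F_def using c comb_lt[OF sub2a] comb_lt[OF sub2b] by (auto intro!: xor_lt)
  moreover have "inj_on (F c xs) positions"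
  proof (rule inj_onI)
    fix p q assume p: "p \<in> positions" and q: "q \<in> positions" and e: "F c xs p = F c xs q"
    obtain i j where pij: "p = (i,j)" "i < 4" "j < 4" using p unfolding positions_def by auto
    obtain i' j' where qij: "q = (i',j')" "i' < 4" "j' < 4" using q unfolding positions_def by auto
    have "comb xs (i + 4*j) = comb xs (i' + 4*j')"
      using e p q pij qij by (simp add: F_def comb4[OF len])
    moreover have "i + 4*j \<in> {..<2^length xs}" "i' + 4*j' \<in> {..<2^length xs}" using pij qij len by auto
    ultimately have "i + 4*j = i' + 4*j'" using inj by (simp add: inj_on_eq_iff)
    then have "i = i' \<and> j = j'" using pij(2) qij(2) by arith
    then show "p = q" using pij qij by simp
  qed
  ultimately show "F c xs \<in> quad_squares n" unfolding quad_squares_def by blast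
  show "strongly_magic (F c xs)" unfolding strongly_magic_def
  proof (intro allI impI)
    fix p1 p2 p3 p4 :: "nat \<times> nat"
    assume h: "p1 \<in> positions \<and> p2 \<in> positions \<and> p3 \<in> positions \<and> p4 \<in> positions \<and>
       distinct [p1, p2, p3, p4] \<and>
       xor (xor (xor (fst p1) (fst p2)) (fst p3)) (fst p4) = 0 \<and>
       xor (xor (xor (snd p1) (snd p2)) (snd p3)) (snd p4) = 0"
    define T where "T = comb (take 2 xs)"
    define D where "D = comb (drop 2 xs)"
    have T0: "xor (xor (xor (T (fst p1)) (T (fst p2))) (T (fst p3))) (T (fst p4)) = 0"
    proof -
      have "T (xor (xor (xor (fst p1) (fst p2)) (fst p3)) (fst p4)) = xor (xor (xor (T (fst p1)) (T (fst p2))) (T (fst p3))) (T (fst p4))"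
        unfolding T_def by (simp only: comb_xor)
      then show ?thesis using h unfolding T_def by simp
    qed
    have D0: "xor (xor (xor (D (snd p1)) (D (snd p2))) (D (snd p3))) (D (snd p4)) = 0"
    proof -
      have "D (xor (xor (xor (snd p1) (snd p2)) (snd p3)) (snd p4)) = xor (xor (xor (D (snd p1)) (D (snd p2))) (D (snd p3))) (D (snd p4))"
        unfolding D_def by (simp only: comb_xor)
      then show ?thesis using h unfolding D_def by simp
    qed
    have "xor (xor (xor (F c xs p1) (F c xs p2)) (F c xs p3)) (F c xs p4)
       = xor (xor (xor (xor (T (fst p1)) (T (fst p2))) (T (fst p3))) (T (fst p4)))
             (xor (xor (xor (D (snd p1)) (D (snd p2))) (D (snd p3))) (D (snd p4)))"
    proof -
      have Fp: "F c xs p = xor c (xor (T (fst p)) (D (snd p)))" if "p \<in> positions" for p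
        using that unfolding F_def T_def D_def restrict_def by (simp only: if_True)
      from h have "p1 \<in> positions" "p2 \<in> positions" "p3 \<in> positions" "p4 \<in> positions" by auto
      then show ?thesis by (simp only: Fp xor4)
    qed
    then show "is_quad (F c xs p1) (F c xs p2) (F c xs p3) (F c xs p4)"
      unfolding is_quad_def using T0 D0 by simp
  qed
qed

lemma pos_mem: "(i,j) \<in> positions \<longleftrightarrow> i < 4 \<and> j < 4"
  unfolding positions_def by auto

lemma magic_form:
  assumes Qs: "Q \<in> quad_squares n" and Qm: "strongly_magic Q"
  shows "\<exists>c xs. c < 2^n \<and> xs \<in> IL n 4 \<and> Q = F c xs"
proof -
  have QP: "Q \<in> positions \<rightarrow>\<^sub>E {..<2^n}" and Qi: "inj_on Q positions"
    using Qs unfolding quad_squares_def by auto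
  have Qlt: "i < 4 \<Longrightarrow> j < 4 \<Longrightarrow> Q (i,j) < 2^n" for i j
    using QP pos_mem by (auto simp: PiE_def Pi_def)
  have qd: "Q p4 = xor (xor (Q p1) (Q p2)) (Q p3)"
    if "p1 \<in> positions" "p2 \<in> positions" "p3 \<in> positions" "p4 \<in> positions"
       "distinct [p1, p2, p3, p4]"
       "xor (xor (xor (fst p1) (fst p2)) (fst p3)) (fst p4) = 0"
       "xor (xor (xor (snd p1) (snd p2)) (snd p3)) (snd p4) = 0" for p1 p2 p3 p4
  proof -
    have "is_quad (Q p1) (Q p2) (Q p3) (Q p4)" using Qm that unfolding strongly_magic_def by blast
    then show ?thesis unfolding is_quad_def by (metis xor_eq0)
  qed
  define c where "c = Q (0,0)"
  define a where "a = xor (Q (1,0)) c"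
  define b where "b = xor (Q (2,0)) c"
  define d where "d = xor (Q (0,1)) c"
  define e where "e = xor (Q (0,2)) c"
  define xs where "xs = [a,b,d,e]"
  have row: "comb [a,b] i = xor (Q (i,0)) c" if "i < 4" for i
  proof -
    have "i = 0 \<or> i = 1 \<or> i = 2 \<or> i = 3" using that by auto
    moreover have "Q (3,0) = xor (xor (Q (0,0)) (Q (1,0))) (Q (2,0))"
      by (rule qd) (auto simp: pos_mem)
    ultimately show ?thesis unfolding a_def b_def c_def by (auto simp: ac_simps)
  qed
  have col: "comb [d,e] j = xor (Q (0,j)) c" if "j < 4" for j
  proof -
    have "j = 0 \<or> j = 1 \<or> j = 2 \<or> j = 3" using that by auto
    moreover have "Q (0,3) = xor (xor (Q (0,0)) (Q (0,1))) (Q (0,2))"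
      by (rule qd) (auto simp: pos_mem)
    ultimately show ?thesis unfolding d_def e_def c_def by (auto simp: ac_simps)
  qed
  have C: "Q (i,j) = xor (xor c (Q (i,0))) (Q (0,j))" if "i < 4" "j < 4" for i j
  proof (cases "i = 0 \<or> j = 0")
    case True then show ?thesis unfolding c_def by (auto simp: ac_simps)
  next
    case False
    show ?thesis unfolding c_def
      by (rule qd) (use that False in \<open>auto simp: pos_mem\<close>)
  qed
  have val: "xor (comb [a,b] i) (comb [d,e] j) = xor (Q (i,j)) c" if "i < 4" "j < 4" for i j
    using row[OF that(1)] col[OF that(2)] C[OF that] by (simp add: ac_simps)
  have clt: "c < 2^n" unfolding c_def by (rule Qlt) auto
  have len: "length xs = 4" unfolding xs_def by simp
  have sub: "set xs \<subseteq> {..<2^n}" unfolding xs_def a_def b_def d_def e_def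
    using clt Qlt by (auto intro!: xor_lt)
  have ind: "indep xs" unfolding indep_def
  proof (intro allI impI)
    fix m assume m: "m < 2^length xs" "comb xs m = 0"
    define i where "i = m mod 4"
    define j where "j = m div 4"
    have ij: "i < 4" "j < 4" "m = i + 4*j" using m(1) len unfolding i_def j_def by auto
    have "comb xs m = xor (Q (i,j)) c" using comb4[OF len ij(1), of j] ij val[OF ij(1,2)]
      unfolding xs_def by simp
    then have "Q (i,j) = Q (0,0)" using m(2) unfolding c_def by (metis xor_eq0)
    then have "(i,j) = (0,0)" using Qi ij by (auto simp: pos_mem dest: inj_onD)
    then show "m = 0" using ij by simp
  qed
  have "Q = F c xs"
  proof (rule extensionalityI)
    show "Q \<in> extensional positions" using QP by (simp add: PiE_def)
    show "F c xs \<in> extensional positions" unfolding F_def by simp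
    fix p assume p: "p \<in> positions"
    then obtain i j where ij: "p = (i,j)" "i < 4" "j < 4" unfolding positions_def by auto
    have "F c xs p = xor c (xor (Q (i,j)) c)" using p ij val[OF ij(2,3)] unfolding F_def xs_def by simp
    then show "Q p = F c xs p" using ij by (simp add: ac_simps)
  qed
  then show ?thesis using clt len sub ind unfolding IL_def by blast
qed

lemma F_inj: "inj_on (\<lambda>(c,xs). F c xs) ({..<2^n} \<times> IL n 4)"
proof (rule inj_onI, clarify)
  fix c xs c' xs' assume "xs \<in> IL n 4" "xs' \<in> IL n 4" and e: "F c xs = F c' xs'"
  then obtain a b d f a' b' d' f' where x: "xs = [a,b,d,f]" "xs' = [a',b',d',f']"
    unfolding IL_def by (auto simp: length_Suc_conv numeral_eq_Suc)
  have "F c xs (0,0) = F c' xs' (0,0)" "F c xs (1,0) = F c' xs' (1,0)" "F c xs (2,0) = F c' xs' (2,0)"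
       "F c xs (0,1) = F c' xs' (0,1)" "F c xs (0,2) = F c' xs' (0,2)" using e by auto
  then have "c = c'" "xor c a = xor c' a'" "xor c b = xor c' b'" "xor c d = xor c' d'" "xor c f = xor c' f'"
    unfolding F_def x by (simp_all add: pos_mem)
  then show "c = c' \<and> xs = xs'" unfolding x by (metis xor_cancel_left)
qed

theorem mainTheorem3:
  fixes n :: nat
  assumes "n \<ge> 4"
  shows "card {Q \<in> quad_squares n. strongly_magic Q}
           = 2^n * (2^n - 1) * (2^n - 2) * (2^n - 4) * (2^n - 8)"
proof -
  have S: "{Q \<in> quad_squares n. strongly_magic Q} = (\<lambda>(c,xs). F c xs) ` ({..<2^n} \<times> IL n 4)"
    using magic_form F_good by fastforce
  have "card {Q \<in> quad_squares n. strongly_magic Q} = card ({..<(2::nat)^n} \<times> IL n 4)"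
    unfolding S by (rule card_image[OF F_inj])
  also have "\<dots> = 2^n * (\<Prod>i<4. 2^n - 2^i)" by (simp add: card_cartesian_product card_IL)
  also have "(\<Prod>i<4. (2::nat)^n - 2^i) = (2^n - 1) * (2^n - 2) * (2^n - 4) * (2^n - 8)"
    by (simp add: numeral_eq_Suc lessThan_Suc mult_ac)
  finally show ?thesis by (simp add: mult_ac)
qed

end
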